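(* Let $\mathcal A_+,\mathcal A_-\subseteq\mathbb R^n$ be disjoint finite sets such that $\mathcal A=\mathcal A_+\cup\mathcal A_-$ is full dimensional and $\mathcal A_-\subseteq\operatorname{int}(\operatorname{conv}(\mathcal A_+))$. Then every SONC signomial $f\in\mathcal S(\mathcal A_+,\mathcal A_-)$ satisfies $\#\operatorname{Sing}_{>0}(f)\le1$.
   Context: For disjoint finite $\mathcal A_+,\mathcal A_-\subseteq\mathbb R^n$, a signomial with signed support $(\mathcal A_+,\mathcal A_-)$ is $f:\mathbb R^n_{>0}\to\mathbb R$, $f(x)=\sum_{a\in\mathcal A_+}c_ax^a-\sum_{b\in\mathcal A_-}c_bx^b$ with all $c_a,c_b>0$; $\mathcal S(\mathcal A_+,\mathcal A_-)$ is the set of these. Full dimensional means $\dim\operatorname{conv}(\mathcal A)=n$. $\operatorname{Sing}_{>0}(f)$ is the set of $x\in\mathbb R^n_{>0}$ with $f(x)=x_1\partial_{x_1}f(x)=\dots=x_n\partial_{x_n}f(x)=0$. A signed support $(\mathcal B_+,\mathcal B_-)$ with $\mathcal B=\mathcal B_+\cup\mathcal B_-$ is an extended circuit if either $\#\mathcal B=\#\mathcal B_+=1$ or $\operatorname{conv}(\mathcal B)$ is a simplex whose vertex set is $\mathcal B_+$; it is a circuit if either $\#\mathcal B=\#\mathcal B_+=1$ or it is an extended circuit with $\#\mathcal B_-=1$ and $\mathcal B_-\subseteq\operatorname{relint}(\operatorname{conv}(\mathcal B_+))$. A circuit signomial is a signomial whose signed support is a circuit. A signomial on $\mathbb R^n_{>0}$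 is SONC if it is a finite sum of circuit signomials each of which is nonnegative on $\mathbb R^n_{>0}$. *)

theory Defs
  imports "HOL-Analysis.Analysis"
begin

definition pos_orthant :: "(real ^ 'n) set" where
  "pos_orthant = {x. \<forall>i. x $ i > 0}"

definition monomial_powr :: "real ^ 'n \<Rightarrow> real ^ 'n \<Rightarrow> real" where
  "monomial_powr x a = (\<Prod>i\<in>UNIV. (x $ i) powr (a $ i))"

definition signomials :: "(real ^ 'n) set \<Rightarrow> (real ^ 'n) set \<Rightarrow> (real ^ 'n \<Rightarrow> real) set" where
  "signomials Ap Am = {f. \<exists>c :: real ^ 'n \<Rightarrow> real.
      (\<forall>a\<in>Ap \<union> Am. c a > 0) \<and>
      (\<forall>x\<in>pos_orthant. f x = (\<Sum>a\<in>Ap. c a * monomial_powr x a) - (\<Sum>b\<in>Am. c b * monomial_powr x b))}"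

definition partial_deriv :: "(real ^ 'n \<Rightarrow> real) \<Rightarrow> 'n \<Rightarrow> real ^ 'n \<Rightarrow> real" where
  "partial_deriv f i x = deriv (\<lambda>t. f (x + (t - x $ i) *\<^sub>R axis i 1)) (x $ i)"

definition Sing_pos :: "(real ^ 'n \<Rightarrow> real) \<Rightarrow> (real ^ 'n) set" where
  "Sing_pos f = {x \<in> pos_orthant. f x = 0 \<and> (\<forall>i. x $ i * partial_deriv f i x = 0)}"

definition extended_circuit :: "(real ^ 'n) set \<Rightarrow> (real ^ 'n) set \<Rightarrow> bool" where
  "extended_circuit Bp Bm \<longleftrightarrow>
     finite Bp \<and> finite Bm \<and> Bp \<inter> Bm = {} \<and>
     ((card (Bp \<union> Bm) = 1 \<and> card Bp = 1) \<or>
      (Bp \<noteq> {} \<and> \<not> affine_dependent Bp \<and> convex hull (Bp \<union> Bm) = convex hull Bp))"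

definition circuit :: "(real ^ 'n) set \<Rightarrow> (real ^ 'n) set \<Rightarrow> bool" where
  "circuit Bp Bm \<longleftrightarrow>
     finite Bp \<and> finite Bm \<and> Bp \<inter> Bm = {} \<and>
     ((card (Bp \<union> Bm) = 1 \<and> card Bp = 1) \<or>
      (extended_circuit Bp Bm \<and> card Bm = 1 \<and> Bm \<subseteq> rel_interior (convex hull Bp)))"

definition circuit_signomial :: "(real ^ 'n \<Rightarrow> real) \<Rightarrow> bool" where
  "circuit_signomial f \<longleftrightarrow> (\<exists>Bp Bm. circuit Bp Bm \<and> f \<in> signomials Bp Bm)"

definition SONC :: "(real ^ 'n \<Rightarrow> real) \<Rightarrow> bool" where
  "SONC f \<longleftrightarrow> (\<exists>(k::nat) (g :: nat \<Rightarrow> real ^ 'n \<Rightarrow> real).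
     (\<forall>j<k. circuit_signomial (g j) \<and> (\<forall>x\<in>pos_orthant. g j x \<ge> 0)) \<and>
     (\<forall>x\<in>pos_orthant. f x = (\<Sum>j<k. g j x)))"

end

theory Submission
  imports Defs
begin

definition E :: "real ^ 'n \<Rightarrow> real ^ 'n" where "E v = (\<chi> i. exp (v $ i))"

lemma E_pos: "E v \<in> pos_orthant"
  by (simp add: E_def pos_orthant_def)

lemma mono_E: "monomial_powr (E v) a = exp (a \<bullet> v)"
  unfolding monomial_powr_def inner_vec_def E_def
  by (simp add: powr_def exp_sum)

lemma exp_line: "exp (a \<bullet> (y0 + t *\<^sub>R d)) = exp (a \<bullet> y0) * exp (t * (a \<bullet> d))"
  by (simp add: inner_add_right exp_add)

lemma alpha_exp: "(\<alpha>::real) * (exp \<alpha> - 1) \<ge> 0"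
proof (cases "\<alpha> \<ge> 0")
  case True then show ?thesis by (simp add: mult_nonneg_nonneg)
next
  case False then have "exp \<alpha> < 1" by simp
  then show ?thesis using False by (simp add: mult_nonpos_nonpos)
qed

lemma alpha_exp0: "(\<alpha>::real) * (exp \<alpha> - 1) = 0 \<Longrightarrow> \<alpha> = 0"
  by auto

lemma phi_const:
  fixes q \<alpha> :: "'a \<Rightarrow> real" and B :: "'a set"
  assumes fin: "finite B" and q: "\<forall>a\<in>B. q a > 0"
    and nn: "\<And>t. (\<Sum>a\<in>B. q a * exp (t * \<alpha> a)) - cb \<ge> 0"
    and z0: "(\<Sum>a\<in>B. q a * exp (0 * \<alpha> a)) - cb = 0"
    and z1: "(\<Sum>a\<in>B. q a * exp (1 * \<alpha> a)) - cb = 0"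
  shows "(\<Sum>a\<in>B. q a * exp (t * \<alpha> a)) - cb = 0"
proof -
  define \<phi> where "\<phi> t = (\<Sum>a\<in>B. q a * exp (t * \<alpha> a)) - cb" for t
  have der: "(\<phi> has_real_derivative (\<Sum>a\<in>B. q a * (exp (s * \<alpha> a) * \<alpha> a))) (at s)" for s
    unfolding \<phi>_def
    by (auto intro!: derivative_eq_intros simp: ac_simps)
  have d0: "(\<Sum>a\<in>B. q a * (exp (0 * \<alpha> a) * \<alpha> a)) = 0"
  proof (rule DERIV_local_min[OF der[of 0] zero_less_one])
    have "\<phi> 0 = 0" using z0 by (simp only: \<phi>_def)
    moreover have "\<phi> y \<ge> 0" for y using nn[of y] by (simp only: \<phi>_def)
    ultimately show "\<forall>y. \<bar>0 - y\<bar> < 1 \<longrightarrow> \<phi> 0 \<le> \<phi> y" by simp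
  qed
  have d1: "(\<Sum>a\<in>B. q a * (exp (1 * \<alpha> a) * \<alpha> a)) = 0"
  proof (rule DERIV_local_min[OF der[of 1] zero_less_one])
    have "\<phi> 1 = 0" using z1 by (simp only: \<phi>_def)
    moreover have "\<phi> y \<ge> 0" for y using nn[of y] by (simp only: \<phi>_def)
    ultimately show "\<forall>y. \<bar>1 - y\<bar> < 1 \<longrightarrow> \<phi> 1 \<le> \<phi> y" by simp
  qed
  have s0: "(\<Sum>a\<in>B. q a * (\<alpha> a * (exp (\<alpha> a) - 1))) = 0"
  proof -
    have "(\<Sum>a\<in>B. q a * (\<alpha> a * (exp (\<alpha> a) - 1))) = (\<Sum>a\<in>B. q a * (exp (1 * \<alpha> a) * \<alpha> a)) - (\<Sum>a\<in>B. q a * (exp (0 * \<alpha> a) * \<alpha> a))"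
      unfolding sum_subtractf[symmetric] by (rule sum.cong) (simp_all add: algebra_simps)
    then show ?thesis using d0 d1 by simp
  qed
  have nnB: "q a * (\<alpha> a * (exp (\<alpha> a) - 1)) \<ge> 0" if "a \<in> B" for a
  proof -
    have qa: "q a > 0" using q that by blast
    have h: "0 \<le> \<alpha> a * (exp (\<alpha> a) - 1)" by (rule alpha_exp)
    show ?thesis by (rule mult_nonneg_nonneg[OF less_imp_le[OF qa] h])
  qed
  have all0: "\<forall>a\<in>B. q a * (\<alpha> a * (exp (\<alpha> a) - 1)) = 0"
    by (rule iffD1[OF sum_nonneg_eq_0_iff[OF fin nnB] s0])
  have "\<forall>a\<in>B. \<alpha> a = 0"
  proof
    fix a assume a: "a \<in> B"
    have qa: "q a \<noteq> 0" using q a by force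
    have "q a * (\<alpha> a * (exp (\<alpha> a) - 1)) = 0" using all0 a by blast
    then have "\<alpha> a * (exp (\<alpha> a) - 1) = 0" using qa by simp
    then show "\<alpha> a = 0" by (rule alpha_exp0)
  qed
  then show ?thesis using z0 by simp
qed


lemma circuit_line:
  fixes g :: "real ^ 'n \<Rightarrow> real"
  assumes cs: "circuit_signomial g" and gnn: "\<forall>x\<in>pos_orthant. g x \<ge> 0"
    and g0: "g (E y0) = 0" and g1: "g (E (y0 + d)) = 0"
  shows "g (E (y0 + t *\<^sub>R d)) = 0"
proof -
  obtain Bp Bm where cb: "circuit Bp Bm" and gs: "g \<in> signomials Bp Bm"
    using cs circuit_signomial_def by blast
  obtain c where cpos: "\<forall>a\<in>Bp \<union> Bm. c a > 0" and gf: "\<forall>x\<in>pos_orthant. g x =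
      (\<Sum>a\<in>Bp. c a * monomial_powr x a) - (\<Sum>b\<in>Bm. c b * monomial_powr x b)"
    using gs unfolding signomials_def by blast
  have gE: "g (E v) = (\<Sum>a\<in>Bp. c a * exp (a \<bullet> v)) - (\<Sum>b\<in>Bm. c b * exp (b \<bullet> v))" for v
    using gf[rule_format, OF E_pos[of v]] by (simp add: mono_E)
  from cb have fin: "finite Bp" "finite Bm" "Bp \<inter> Bm = {}"
    and cas: "(card (Bp \<union> Bm) = 1 \<and> card Bp = 1) \<or> card Bm = 1"
    unfolding circuit_def by auto
  show ?thesis
  proof (cases "card Bm = 1")
    case False
    then have c1: "card (Bp \<union> Bm) = 1" "card Bp = 1" using cas by auto
    then obtain a where Bpa: "Bp = {a}" by (auto simp: card_1_singleton_iff)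
    have "card Bm = 0" using c1 card_Un_disjoint[OF fin] by simp
    then have "Bm = {}" using fin by simp
    then have "g (E y0) = c a * exp (a \<bullet> y0)" using gE Bpa by simp
    moreover have "c a * exp (a \<bullet> y0) > 0" using cpos Bpa by simp
    ultimately show ?thesis using g0 by simp
  next
    case True
    then obtain b where Bmb: "Bm = {b}" by (auto simp: card_1_singleton_iff)
    have bnot: "b \<notin> Bp" using fin(3) Bmb by auto
    define q where "q a = c a * exp ((a - b) \<bullet> y0)" for a
    define \<alpha> where "\<alpha> a = (a - b) \<bullet> d" for a
    have ex: "exp (a \<bullet> v) = exp (b \<bullet> v) * exp ((a - b) \<bullet> v)" for a v :: "real ^ 'n"
      by (simp add: inner_diff_left flip: exp_add)
    have key: "g (E (y0 + s *\<^sub>R d)) = exp (b \<bullet> (y0 + s *\<^sub>R d)) * ((\<Sum>a\<in>Bp. q a * exp (s * \<alpha> a)) - c b)" for s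
    proof -
      have "(\<Sum>a\<in>Bp. c a * exp (a \<bullet> (y0 + s *\<^sub>R d))) = exp (b \<bullet> (y0 + s *\<^sub>R d)) * (\<Sum>a\<in>Bp. q a * exp (s * \<alpha> a))"
        unfolding sum_distrib_left
      proof (rule sum.cong[OF refl])
        fix a
        show "c a * exp (a \<bullet> (y0 + s *\<^sub>R d)) = exp (b \<bullet> (y0 + s *\<^sub>R d)) * (q a * exp (s * \<alpha> a))"
          unfolding ex[of a] q_def \<alpha>_def by (simp add: inner_add_right exp_add)
      qed
      then show ?thesis unfolding gE Bmb by (simp add: right_diff_distrib)
    qed
    have qpos: "\<forall>a\<in>Bp. q a > 0" using cpos by (simp add: q_def)
    have nn: "(\<Sum>a\<in>Bp. q a * exp (s * \<alpha> a)) - c b \<ge> 0" for s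
    proof -
      have "0 \<le> g (E (y0 + s *\<^sub>R d))" using gnn E_pos by blast
      then show ?thesis unfolding key by (simp add: zero_le_mult_iff)
    qed
    have z0: "(\<Sum>a\<in>Bp. q a * exp (0 * \<alpha> a)) - c b = 0"
      using key[of 0] g0 by simp
    have z1: "(\<Sum>a\<in>Bp. q a * exp (1 * \<alpha> a)) - c b = 0"
      using key[of 1] g1 by simp
    show ?thesis using phi_const[OF fin(1) qpos nn z0 z1, of t] key[of t] by simp
  qed
qed


theorem proposition3p6:
  fixes Ap Am :: "(real ^ 'n) set" and f :: "real ^ 'n \<Rightarrow> real"
  assumes "finite Ap" and "finite Am" and "Ap \<inter> Am = {}"
    and "aff_dim (Ap \<union> Am) = int CARD('n)"
    and "Am \<subseteq> interior (convex hull Ap)"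
    and "f \<in> signomials Ap Am"
    and "SONC f"
  shows "finite (Sing_pos f) \<and> card (Sing_pos f) \<le> 1"
proof -
  have SZ: "Sing_pos f \<subseteq> {x\<in>pos_orthant. f x = 0}" unfolding Sing_pos_def by auto
  obtain k :: nat and g :: "nat \<Rightarrow> real ^ 'n \<Rightarrow> real" where gk: "\<forall>j<k. circuit_signomial (g j) \<and> (\<forall>x\<in>pos_orthant. g j x \<ge> 0)"
    and fg: "\<forall>x\<in>pos_orthant. f x = (\<Sum>j<k. g j x)"
    using assms(7) unfolding SONC_def by blast
  obtain c where cpos: "\<forall>a\<in>Ap \<union> Am. c a > 0" and ff: "\<forall>x\<in>pos_orthant. f x =
      (\<Sum>a\<in>Ap. c a * monomial_powr x a) - (\<Sum>b\<in>Am. c b * monomial_powr x b)"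
    using assms(6) unfolding signomials_def by blast
  have fE: "f (E v) = (\<Sum>a\<in>Ap. c a * exp (a \<bullet> v)) - (\<Sum>b\<in>Am. c b * exp (b \<bullet> v))" for v
    using ff[rule_format, OF E_pos[of v]] by (simp add: mono_E)
  have Apne: "Ap \<noteq> {}"
  proof
    assume "Ap = {}"
    then have "Am = {}" using assms(5) by auto
    then show False using assms(4) \<open>Ap = {}\<close> by simp
  qed
  have gzero: "g j x = 0" if "j < k" "x \<in> pos_orthant" "f x = 0" for j x
  proof -
    have "(\<Sum>j<k. g j x) = 0" using fg that by simp
    then have "\<forall>j\<in>{..<k}. g j x = 0"
      using sum_nonneg_eq_0_iff[of "{..<k}" "\<lambda>j. g j x"] gk that(2) by auto
    then show ?thesis using that(1) by simp
  qed
  have uniq: "x0 = x1" if x0: "x0 \<in> pos_orthant" "f x0 = 0" and x1: "x1 \<in> pos_orthant" "f x1 = 0" for x0 x1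
  proof (rule ccontr)
    assume ne: "x0 \<noteq> x1"
    define y0 where "y0 = (\<chi> i. ln (x0 $ i))"
    define d where "d = (\<chi> i. ln (x1 $ i)) - y0"
    have Ey0: "E y0 = x0" using x0(1) by (simp add: E_def y0_def pos_orthant_def vec_eq_iff)
    have Ey1: "E (y0 + d) = x1" using x1(1) by (simp add: E_def d_def pos_orthant_def vec_eq_iff)
    have dnz: "d \<noteq> 0" using ne Ey0 Ey1 by auto
    have fline: "f (E (y0 + t *\<^sub>R d)) = 0" for t
    proof -
      have "g j (E (y0 + t *\<^sub>R d)) = 0" if "j < k" for j
        using circuit_line[of "g j" y0 d t] gk that gzero[OF that x0] gzero[OF that x1] Ey0 Ey1
        by simp
      then show ?thesis using fg[rule_format, OF E_pos[of "y0 + t *\<^sub>R d"]] by simp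
    qed
    define M where "M = Max ((\<lambda>a. a \<bullet> d) ` Ap)"
    have Mge: "a \<bullet> d \<le> M" if "a \<in> Ap" for a
      unfolding M_def using assms(1) that by simp
    obtain as where as: "as \<in> Ap" "as \<bullet> d = M"
    proof -
      have "M \<in> (\<lambda>a. a \<bullet> d) ` Ap" unfolding M_def using assms(1) Apne by (intro Max_in) auto
      then show ?thesis using that by auto
    qed
    have hs: "{z. z \<bullet> d \<le> M} = {z. d \<bullet> z \<le> M}"
      by (rule Collect_cong) (metis inner_commute)
    have hull0: "convex hull Ap \<subseteq> {z. d \<bullet> z \<le> M}"
      by (rule hull_minimal) (auto simp: convex_halfspace_le, metis Mge inner_commute)
    have hull: "convex hull Ap \<subseteq> {z. z \<bullet> d \<le> M}"
      using hull0 by (auto simp: inner_commute)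
    have bl: "b \<bullet> d < M" if "b \<in> Am" for b
    proof -
      have "b \<in> interior (convex hull Ap)" using assms(5) that by auto
      then obtain e where e: "e > 0" "ball b e \<subseteq> convex hull Ap"
        using mem_interior by blast
      define z where "z = b + (e / 2 / norm d) *\<^sub>R d"
      have nd: "norm d > 0" using dnz by simp
      have "dist b z < e" unfolding z_def dist_norm using nd e(1) by simp
      then have "z \<in> convex hull Ap" using e(2) by auto
      then have "z \<bullet> d \<le> M" using hull by auto
      moreover have "z \<bullet> d = b \<bullet> d + e / 2 * norm d"
      proof -
        have "z \<bullet> d = b \<bullet> d + (e / 2 / norm d) * (d \<bullet> d)"
          unfolding z_def by (simp add: inner_add_left)
        moreover have "d \<bullet> d = norm d * norm d" by (simp add: dot_square_norm power2_eq_square)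
        moreover have "(e / 2 / norm d) * (norm d * norm d) = e / 2 * norm d" using nd by simp
        ultimately show ?thesis by simp
      qed
      moreover have "e / 2 * norm d > 0" using nd e(1) by simp
      ultimately show ?thesis by linarith
    qed
    define \<delta> where "\<delta> = M - Max (insert (M - 1) ((\<lambda>b. b \<bullet> d) ` Am))"
    have \<delta>pos: "\<delta> > 0"
    proof -
      have "Max (insert (M - 1) ((\<lambda>b. b \<bullet> d) ` Am)) \<in> insert (M - 1) ((\<lambda>b. b \<bullet> d) ` Am)"
        using assms(2) by (intro Max_in) auto
      then show ?thesis unfolding \<delta>_def using bl by auto
    qed
    have b\<delta>: "b \<bullet> d \<le> M - \<delta>" if "b \<in> Am" for b
      unfolding \<delta>_def using assms(2) that by simp
    define cs where "cs = c as * exp (as \<bullet> y0)"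
    have cspos: "cs > 0" using cpos as(1) by (simp add: cs_def)
    define C where "C = (\<Sum>b\<in>Am. c b * exp (b \<bullet> y0))"
    have Cnn: "C \<ge> 0" unfolding C_def using cpos by (intro sum_nonneg) (simp add: less_imp_le)
    define t where "t = C / (cs * \<delta>)"
    have tnn: "t \<ge> 0" unfolding t_def using Cnn cspos \<delta>pos by simp
    have ex: "exp (a \<bullet> (y0 + t *\<^sub>R d)) = exp (a \<bullet> y0) * exp (t * (a \<bullet> d))" for a
      by (simp add: inner_add_right exp_add)
    have s1: "(\<Sum>a\<in>Ap. c a * exp (a \<bullet> (y0 + t *\<^sub>R d))) \<ge> cs * exp (t * M)"
    proof -
      have "c as * exp (as \<bullet> (y0 + t *\<^sub>R d)) \<le> (\<Sum>a\<in>Ap. c a * exp (a \<bullet> (y0 + t *\<^sub>R d)))"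
        using assms(1) as(1) cpos by (intro member_le_sum) (auto simp: less_imp_le)
      then show ?thesis unfolding ex cs_def using as(2) by simp
    qed
    have s2: "(\<Sum>b\<in>Am. c b * exp (b \<bullet> (y0 + t *\<^sub>R d))) \<le> C * exp (t * (M - \<delta>))"
    proof -
      have "(\<Sum>b\<in>Am. c b * exp (b \<bullet> (y0 + t *\<^sub>R d))) \<le> (\<Sum>b\<in>Am. c b * exp (b \<bullet> y0) * exp (t * (M - \<delta>)))"
      proof (rule sum_mono)
        fix b assume b: "b \<in> Am"
        have "t * (b \<bullet> d) \<le> t * (M - \<delta>)" using b\<delta>[OF b] tnn by (simp add: mult_left_mono)
        then have "exp (t * (b \<bullet> d)) \<le> exp (t * (M - \<delta>))" by simp
        then show "c b * exp (b \<bullet> (y0 + t *\<^sub>R d)) \<le> c b * exp (b \<bullet> y0) * exp (t * (M - \<delta>))"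
          unfolding ex using cpos b by (simp add: less_imp_le mult_left_mono)
      qed
      also have "\<dots> = C * exp (t * (M - \<delta>))" unfolding C_def by (simp add: sum_distrib_right)
      finally show ?thesis .
    qed
    have "C < cs * exp (t * \<delta>)"
    proof -
      have "1 + t * \<delta> \<le> exp (t * \<delta>)" by (rule exp_ge_add_one_self)
      moreover have "t * \<delta> = C / cs" unfolding t_def using \<delta>pos by simp
      ultimately have "cs * (1 + C / cs) \<le> cs * exp (t * \<delta>)" using cspos by simp
      then show ?thesis using cspos by (simp add: distrib_left)
    qed
    then have "C * exp (t * (M - \<delta>)) < cs * exp (t * \<delta>) * exp (t * (M - \<delta>))" by simp
    also have "\<dots> = cs * exp (t * M)" by (simp add: mult.assoc flip: exp_add) (simp add: algebra_simps)
    finally have "f (E (y0 + t *\<^sub>R d)) > 0" using s1 s2 fE by simp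
    then show False using fline by simp
  qed
  show ?thesis
  proof (cases "Sing_pos f = {}")
    case True then show ?thesis by simp
  next
    case False
    then obtain x0 where x0: "x0 \<in> Sing_pos f" by blast
    have "Sing_pos f \<subseteq> {x0}" using SZ uniq x0 by blast
    moreover have "finite {x0}" by simp
    ultimately have "finite (Sing_pos f)" by (rule finite_subset)
    moreover have "card (Sing_pos f) \<le> card {x0}"
      by (rule card_mono) (simp_all add: \<open>Sing_pos f \<subseteq> {x0}\<close>)
    ultimately show ?thesis by simp
  qed
qed

end
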